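(* Let $j,k$ be two settings with short-regression parameters $\theta^j_s,\theta^k_s$ and bias bounds $\nu^j_l=-\nu^{j*}$, $\nu^j_u=\nu^{j*}$, $\nu^k_l=-\nu^{k*}$, $\nu^k_u=\nu^{k*}$ with $\nu^{j*},\nu^{k*}>0$, and suppose the proportionality bounds are symmetric: $\rho^{jk}\in[1/\rho^{jk}_u,\rho^{jk}_u]$ with $\rho^{jk}_u\ge1$. Let $\mathbb{C}^{jk}=\{\frac{1-\rho^{jk}_u}{\rho^{jk}_u}\nu^k_l,(\rho^{jk}_u-1)\nu^k_l,\frac{1-\rho^{jk}_u}{\rho^{jk}_u}\nu^k_u,(\rho^{jk}_u-1)\nu^k_u\}$, $c^{jk}_l=\min\mathbb{C}^{jk}$, $c^{jk}_u=\max\mathbb{C}^{jk}$. Then $c^{jk}_u=(\rho^{jk}_u-1)\nu^{k*}$ and $c^{jk}_l=-(\rho^{jk}_u-1)\nu^{k*}$, and the marginal sharpening conditions — namely (1) $\nu^k_u+c^{jk}_u<\nu^j_u$ or (2) $\nu^k_l+c^{jk}_l>\nu^j_l$ — reduce to $\nu^{j*}>\rho^{jk}_u\nu^{k*}$. In particular, when $\nu^{j*}=\nu^{k*}$, strict marginal sharpening never occurs for any $\rho^{jk}_u>1$, i.e. $\mathrm{proj}_j(\mathcal{J}^{jk})=\mathcal{I}^j$.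
   Context: Here $\mathcal{I}^i=[\theta^i_s-\nu^i_u,\theta^i_s-\nu^i_l]$ for $i\in\{j,k\}$, $\mathcal{I}^{jk}_D=[(\theta^j_s-\theta^k_s)-c^{jk}_u,(\theta^j_s-\theta^k_s)-c^{jk}_l]$, $\mathcal{J}^{jk}=\{(\theta^j,\theta^k):\theta^j\in\mathcal{I}^j,\theta^k\in\mathcal{I}^k,\theta^j-\theta^k\in\mathcal{I}^{jk}_D\}$, and $\mathrm{proj}_j(\mathcal{J}^{jk})=\{\theta^j:\exists\theta^k,(\theta^j,\theta^k)\in\mathcal{J}^{jk}\}$. Strict marginal sharpening means $\mathrm{proj}_j(\mathcal{J}^{jk})\subsetneq\mathcal{I}^j$, which holds if and only if condition (1) or (2) holds. In the paper's framework, $\theta^i$ is a setting-specific causal effect, $\theta^i_s$ the corresponding omitted-variable short-regression parameter, the bias $B^i=\theta^i_s-\theta^i$ lies in $[\nu^i_l,\nu^i_u]$, and $B^j=\rho^{jk}B^k$. *)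

theory Defs
  imports Complex_Main
begin

definition ident_int :: "real \<Rightarrow> real \<Rightarrow> real \<Rightarrow> real set" where
  "ident_int \<theta>s \<nu>l \<nu>u = {\<theta>s - \<nu>u .. \<theta>s - \<nu>l}"

definition Cset :: "real \<Rightarrow> real \<Rightarrow> real \<Rightarrow> real set" where
  "Cset \<rho>u \<nu>kl \<nu>ku = {(1 - \<rho>u) / \<rho>u * \<nu>kl, (\<rho>u - 1) * \<nu>kl,
                        (1 - \<rho>u) / \<rho>u * \<nu>ku, (\<rho>u - 1) * \<nu>ku}"

definition c_l :: "real \<Rightarrow> real \<Rightarrow> real \<Rightarrow> real" where
  "c_l \<rho>u \<nu>kl \<nu>ku = Min (Cset \<rho>u \<nu>kl \<nu>ku)"

definition c_u :: "real \<Rightarrow> real \<Rightarrow> real \<Rightarrow> real" where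
  "c_u \<rho>u \<nu>kl \<nu>ku = Max (Cset \<rho>u \<nu>kl \<nu>ku)"

definition diff_int :: "real \<Rightarrow> real \<Rightarrow> real \<Rightarrow> real \<Rightarrow> real set" where
  "diff_int \<theta>js \<theta>ks cl cu = {(\<theta>js - \<theta>ks) - cu .. (\<theta>js - \<theta>ks) - cl}"

definition joint_set :: "real \<Rightarrow> real \<Rightarrow> real \<Rightarrow> real \<Rightarrow> real \<Rightarrow> real \<Rightarrow> real \<Rightarrow> real
    \<Rightarrow> (real \<times> real) set" where
  "joint_set \<theta>js \<theta>ks \<nu>jl \<nu>ju \<nu>kl \<nu>ku cl cu =
     {(tj, tk). tj \<in> ident_int \<theta>js \<nu>jl \<nu>ju \<and> tk \<in> ident_int \<theta>ks \<nu>kl \<nu>ku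
              \<and> tj - tk \<in> diff_int \<theta>js \<theta>ks cl cu}"

definition proj_j :: "(real \<times> real) set \<Rightarrow> real set" where
  "proj_j S = {tj. \<exists>tk. (tj, tk) \<in> S}"

end

theory Submission
  imports Defs
begin

theorem corollary1:
  fixes \<theta>js \<theta>ks \<nu>jstar \<nu>kstar \<rho>u :: real
  assumes "\<nu>jstar > 0" and "\<nu>kstar > 0" and "\<rho>u \<ge> 1"
  shows "c_u \<rho>u (- \<nu>kstar) \<nu>kstar = (\<rho>u - 1) * \<nu>kstar
       \<and> c_l \<rho>u (- \<nu>kstar) \<nu>kstar = - ((\<rho>u - 1) * \<nu>kstar)
       \<and> ((\<nu>kstar + c_u \<rho>u (- \<nu>kstar) \<nu>kstar < \<nu>jstar
            \<or> - \<nu>kstar + c_l \<rho>u (- \<nu>kstar) \<nu>kstar > - \<nu>jstar)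
           \<longleftrightarrow> \<nu>jstar > \<rho>u * \<nu>kstar)
       \<and> (\<nu>jstar = \<nu>kstar \<and> \<rho>u > 1 \<longrightarrow>
           proj_j (joint_set \<theta>js \<theta>ks (- \<nu>jstar) \<nu>jstar (- \<nu>kstar) \<nu>kstar
                     (c_l \<rho>u (- \<nu>kstar) \<nu>kstar) (c_u \<rho>u (- \<nu>kstar) \<nu>kstar))
           = ident_int \<theta>js (- \<nu>jstar) \<nu>jstar)"
proof -
  let ?a = "(\<rho>u - 1) * \<nu>kstar"
  have a0: "?a \<ge> 0" using assms by simp
  have rp: "\<rho>u > 0" using assms by simp
  have b1: "(1 - \<rho>u) / \<rho>u * \<nu>kstar \<le> ?a \<and> (1 - \<rho>u) / \<rho>u * \<nu>kstar \<ge> - ?a"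
  proof -
    have "(\<rho>u - 1) / \<rho>u * \<nu>kstar \<le> (\<rho>u - 1) * \<nu>kstar"
    proof -
      have "0 \<le> (\<rho>u - 1) * \<nu>kstar" using assms by simp
      hence "(\<rho>u - 1) * \<nu>kstar * 1 \<le> (\<rho>u - 1) * \<nu>kstar * \<rho>u"
        using assms by (intro mult_left_mono) auto
      thus ?thesis using rp by (simp add: divide_simps)
    qed
    moreover have "(\<rho>u - 1) / \<rho>u * \<nu>kstar \<ge> 0" using assms by simp
    moreover have "(1 - \<rho>u) / \<rho>u * \<nu>kstar = - ((\<rho>u - 1) / \<rho>u * \<nu>kstar)"
      using rp by (simp add: divide_simps algebra_simps)
    moreover have g: "\<And>x y z::real. x \<le> y \<Longrightarrow> 0 \<le> x \<Longrightarrow> z = - x \<Longrightarrow> z \<le> y \<and> z \<ge> - y" by linarith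
    ultimately show ?thesis by blast
  qed
  have fin: "finite (Cset \<rho>u (- \<nu>kstar) \<nu>kstar)" unfolding Cset_def by simp
  have cu: "c_u \<rho>u (- \<nu>kstar) \<nu>kstar = ?a"
    unfolding c_u_def
    apply (rule Max_eqI[OF fin])
    using b1 a0 unfolding Cset_def by auto
  have cl: "c_l \<rho>u (- \<nu>kstar) \<nu>kstar = - ?a"
    unfolding c_l_def
    apply (rule Min_eqI[OF fin])
    using b1 a0 unfolding Cset_def by auto
  have p3: "((\<nu>kstar + c_u \<rho>u (- \<nu>kstar) \<nu>kstar < \<nu>jstar
            \<or> - \<nu>kstar + c_l \<rho>u (- \<nu>kstar) \<nu>kstar > - \<nu>jstar)
           \<longleftrightarrow> \<nu>jstar > \<rho>u * \<nu>kstar)"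
    unfolding cu cl by (auto simp: algebra_simps)
  have p4: "proj_j (joint_set \<theta>js \<theta>ks (- \<nu>jstar) \<nu>jstar (- \<nu>kstar) \<nu>kstar
                     (c_l \<rho>u (- \<nu>kstar) \<nu>kstar) (c_u \<rho>u (- \<nu>kstar) \<nu>kstar))
           = ident_int \<theta>js (- \<nu>jstar) \<nu>jstar" if h: "\<nu>jstar = \<nu>kstar"
  proof
    show "proj_j (joint_set \<theta>js \<theta>ks (- \<nu>jstar) \<nu>jstar (- \<nu>kstar) \<nu>kstar
                     (c_l \<rho>u (- \<nu>kstar) \<nu>kstar) (c_u \<rho>u (- \<nu>kstar) \<nu>kstar))
           \<subseteq> ident_int \<theta>js (- \<nu>jstar) \<nu>jstar"
      unfolding proj_j_def joint_set_def by auto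
  next
    show "ident_int \<theta>js (- \<nu>jstar) \<nu>jstar \<subseteq> proj_j (joint_set \<theta>js \<theta>ks (- \<nu>jstar) \<nu>jstar (- \<nu>kstar) \<nu>kstar
                     (c_l \<rho>u (- \<nu>kstar) \<nu>kstar) (c_u \<rho>u (- \<nu>kstar) \<nu>kstar))"
    proof
      fix tj assume tj: "tj \<in> ident_int \<theta>js (- \<nu>jstar) \<nu>jstar"
      have "(tj, tj - \<theta>js + \<theta>ks) \<in> joint_set \<theta>js \<theta>ks (- \<nu>jstar) \<nu>jstar (- \<nu>kstar) \<nu>kstar
                     (c_l \<rho>u (- \<nu>kstar) \<nu>kstar) (c_u \<rho>u (- \<nu>kstar) \<nu>kstar)"
        using tj h a0 unfolding joint_set_def ident_int_def diff_int_def cu cl by auto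
      then show "tj \<in> proj_j (joint_set \<theta>js \<theta>ks (- \<nu>jstar) \<nu>jstar (- \<nu>kstar) \<nu>kstar
                     (c_l \<rho>u (- \<nu>kstar) \<nu>kstar) (c_u \<rho>u (- \<nu>kstar) \<nu>kstar))"
        unfolding proj_j_def by blast
    qed
  qed
  show ?thesis using cu cl p3 p4 by blast
qed

end
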